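(* Let $P[1..m]$ and $S[1..m]$ be strings of the same length over a totally ordered alphabet. Then $$S[\mathcal{PP}_P(i)]\preceq S[i]\preceq S[\mathcal{PC}_P(i)]\ \text{ for all } 1\le i\le m$$ holds if and only if $$S[\mathcal{GP}_P(i)]\preceq S[i]\ \text{ for all } 1\le i\le m.$$
   Context: A string $S$ is a finite sequence $S[1],S[2],\dots$ over an alphabet $\Sigma$ with a total order $<$; $S[i..j]$ denotes the substring $S[i]\cdots S[j]$ (empty if $i>j$). For positions $i,j$ of $S$, write $S[i]\prec S[j]$ iff either $S[i]<S[j]$, or $S[i]$ and $S[j]$ have the same value and $i<j$; write $S[i]\preceq S[j]$ iff $S[i]\prec S[j]$ or $i=j$. Minimum elements are taken with respect to $\prec$ (leftmost among equal minimal values). Prefix-parent representation: $\mathcal{PP}_S(i)=\max\{j: 1\le j<i,\ S[j]\prec S[i]\}$ if such $j$ exists, and $\mathcal{PP}_S(i)=i$ otherwise. Prefix-child representation: $\mathcal{PC}_S(1)=1$, and for $i\ge 2$: if $\mathcal{PP}_S(i)=i$, then $\mathcal{PC}_S(i)$ is the index $j\in[1,i-1]$ such that $S[j]$ is the minimum of $S[1..i-1]$; if $\mathcal{PP}_S(i)=i-1$, then $\mathcal{PC}_S(i)=i$; if $\mathcal{PP}_S(i)<i-1$, then $\mathcal{PC}_S(i)$ is the index $j$ with $\mathcal{PP}_S(i)<j<i$ such that $S[j]$ is the minimum of $S[\mathcal{PP}_S(i)+1..i-1]$. Global-parent representation: $\mathcal{GP}_S(i)=j$ if there is an index $j>i$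 with $\mathcal{PC}_S(j)=i$ (there is at most one such $j$), and $\mathcal{GP}_S(i)=\mathcal{PP}_S(i)$ otherwise. *)

theory Defs
  imports Main
begin

text \<open>Strings are modelled as functions from positions to a linearly ordered
alphabet; a string of length m is S restricted to positions 1..m.\<close>

definition prec :: "(nat \<Rightarrow> 'a::linorder) \<Rightarrow> nat \<Rightarrow> nat \<Rightarrow> bool" where
  "prec S i j \<longleftrightarrow> S i < S j \<or> (S i = S j \<and> i < j)"

definition preceq :: "(nat \<Rightarrow> 'a::linorder) \<Rightarrow> nat \<Rightarrow> nat \<Rightarrow> bool" where
  "preceq S i j \<longleftrightarrow> prec S i j \<or> i = j"

definition minidx :: "(nat \<Rightarrow> 'a::linorder) \<Rightarrow> nat \<Rightarrow> nat \<Rightarrow> nat" where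
  "minidx S a b = (THE j. a \<le> j \<and> j \<le> b \<and> (\<forall>k. a \<le> k \<and> k \<le> b \<longrightarrow> preceq S j k))"

definition PP :: "(nat \<Rightarrow> 'a::linorder) \<Rightarrow> nat \<Rightarrow> nat" where
  "PP S i = (if \<exists>j. 1 \<le> j \<and> j < i \<and> prec S j i
             then Max {j. 1 \<le> j \<and> j < i \<and> prec S j i} else i)"

definition PC :: "(nat \<Rightarrow> 'a::linorder) \<Rightarrow> nat \<Rightarrow> nat" where
  "PC S i = (if i = 1 then 1
             else if PP S i = i then minidx S 1 (i - 1)
             else if PP S i = i - 1 then i
             else minidx S (PP S i + 1) (i - 1))"

definition GP :: "(nat \<Rightarrow> 'a::linorder) \<Rightarrow> nat \<Rightarrow> nat \<Rightarrow> nat" where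
  "GP S m i = (if \<exists>j. i < j \<and> j \<le> m \<and> PC S j = i
               then (THE j. i < j \<and> j \<le> m \<and> PC S j = i) else PP S i)"

end

theory Submission
  imports Defs
begin

lemma prec_trans: "prec S a b \<Longrightarrow> prec S b c \<Longrightarrow> prec S a c"
  unfolding prec_def by auto

lemma prec_asym: "prec S a b \<Longrightarrow> \<not> prec S b a"
  unfolding prec_def by auto

lemma prec_total: "a \<noteq> b \<Longrightarrow> prec S a b \<or> prec S b a"
  unfolding prec_def by (metis linorder_neqE nat_neq_iff)

lemma preceq_trans: "preceq S a b \<Longrightarrow> preceq S b c \<Longrightarrow> preceq S a c"
  unfolding preceq_def using prec_trans by blast

lemma preceq_antisym: "preceq S a b \<Longrightarrow> preceq S b a \<Longrightarrow> a = b"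
  unfolding preceq_def using prec_asym by blast

lemma preceq_total: "preceq S a b \<or> preceq S b a"
  unfolding preceq_def using prec_total by blast

lemma minidx_ex: "a \<le> b \<Longrightarrow> \<exists>j. a \<le> j \<and> j \<le> b \<and> (\<forall>k. a \<le> k \<and> k \<le> b \<longrightarrow> preceq S j k)"
proof (induction b)
  case 0
  then show ?case by (auto simp: preceq_def)
next
  case (Suc b)
  show ?case
  proof (cases "a = Suc b")
    case True
    then show ?thesis by (auto simp: preceq_def)
  next
    case False
    then have "a \<le> b" using Suc by auto
    then obtain j where j: "a \<le> j" "j \<le> b" "\<forall>k. a \<le> k \<and> k \<le> b \<longrightarrow> preceq S j k"
      using Suc by auto
    show ?thesis
    proof (cases "preceq S j (Suc b)")
      case True
      then show ?thesis using j by (intro exI[of _ j]) (auto simp: le_Suc_eq)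
    next
      case False
      then have "preceq S (Suc b) j" using preceq_total by blast
      have "\<forall>k. a \<le> k \<and> k \<le> Suc b \<longrightarrow> preceq S (Suc b) k"
      proof (intro allI impI)
        fix k assume k: "a \<le> k \<and> k \<le> Suc b"
        show "preceq S (Suc b) k"
        proof (cases "k = Suc b")
          case True then show ?thesis by (simp add: preceq_def)
        next
          case False
          then have "preceq S j k" using j k by auto
          then show ?thesis using \<open>preceq S (Suc b) j\<close> preceq_trans by blast
        qed
      qed
      then show ?thesis using \<open>a \<le> b\<close> by (intro exI[of _ "Suc b"]) auto
    qed
  qed
qed

lemma minidx_prop:
  assumes "a \<le> b"
  shows "a \<le> minidx S a b \<and> minidx S a b \<le> b \<and> (\<forall>k. a \<le> k \<and> k \<le> b \<longrightarrow> preceq S (minidx S a b) k)"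
proof -
  have "\<exists>!j. a \<le> j \<and> j \<le> b \<and> (\<forall>k. a \<le> k \<and> k \<le> b \<longrightarrow> preceq S j k)"
    using minidx_ex[OF assms] preceq_antisym by blast
  then show ?thesis unfolding minidx_def by (rule theI')
qed

lemma PP_cases:
  "(PP P i = i \<and> (\<forall>k. 1 \<le> k \<and> k < i \<longrightarrow> prec P i k)) \<or>
   (1 \<le> PP P i \<and> PP P i < i \<and> prec P (PP P i) i \<and> (\<forall>k. PP P i < k \<and> k < i \<longrightarrow> prec P i k))"
proof (cases "\<exists>j. 1 \<le> j \<and> j < i \<and> prec P j i")
  case True
  let ?A = "{j. 1 \<le> j \<and> j < i \<and> prec P j i}"
  have fin: "finite ?A" by (rule finite_subset[of _ "{..<i}"]) auto
  have ne: "?A \<noteq> {}" using True by auto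
  have pp: "PP P i = Max ?A" using True unfolding PP_def by auto
  have mem: "Max ?A \<in> ?A" using Max_in[OF fin ne] .
  have "\<forall>k. Max ?A < k \<and> k < i \<longrightarrow> prec P i k"
  proof (intro allI impI)
    fix k assume k: "Max ?A < k \<and> k < i"
    have "k \<notin> ?A" using Max_ge[OF fin, of k] k by linarith
    then have "\<not> prec P k i" using k mem by auto
    moreover have "k \<noteq> i" using k by simp
    ultimately show "prec P i k" using prec_total by blast
  qed
  then show ?thesis using pp mem by auto
next
  case False
  then have "PP P i = i" unfolding PP_def by auto
  moreover have "\<forall>k. 1 \<le> k \<and> k < i \<longrightarrow> prec P i k"
  proof (intro allI impI)
    fix k assume k: "1 \<le> k \<and> k < i"
    then have "\<not> prec P k i" "k \<noteq> i" using False by auto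
    then show "prec P i k" using prec_total by blast
  qed
  ultimately show ?thesis by auto
qed

lemma PP_char1:
  assumes "1 \<le> p" "p < c" "prec P p c" "\<forall>k. p < k \<and> k < c \<longrightarrow> \<not> prec P k c"
  shows "PP P c = p"
proof -
  let ?A = "{j. 1 \<le> j \<and> j < c \<and> prec P j c}"
  have fin: "finite ?A" by (rule finite_subset[of _ "{..<c}"]) auto
  have "p \<in> ?A" using assms by auto
  moreover have "\<forall>k\<in>?A. k \<le> p"
  proof
    fix k assume k: "k \<in> ?A"
    show "k \<le> p"
    proof (rule ccontr)
      assume "\<not> k \<le> p"
      then have "p < k" by simp
      moreover have "k < c" "prec P k c" using k by auto
      ultimately show False using assms(4) by blast
    qed
  qed
  ultimately have "Max ?A = p" using fin by (intro Max_eqI) blast+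
  moreover have "\<exists>j. 1 \<le> j \<and> j < c \<and> prec P j c" using assms by blast
  ultimately show ?thesis unfolding PP_def by simp
qed

lemma PP_char2:
  assumes "\<forall>k. 1 \<le> k \<and> k < c \<longrightarrow> \<not> prec P k c"
  shows "PP P c = c"
  using assms unfolding PP_def by auto

lemma PC_bounds:
  assumes "1 \<le> i"
  shows "1 \<le> PC P i \<and> PC P i \<le> i"
proof -
  consider "i = 1" | "i \<noteq> 1" "PP P i = i" | "i \<noteq> 1" "PP P i \<noteq> i" "PP P i = i - 1"
    | "i \<noteq> 1" "PP P i \<noteq> i" "PP P i \<noteq> i - 1" by blast
  then show ?thesis
  proof cases
    case 1 then show ?thesis unfolding PC_def by auto
  next
    case 2
    then have "1 \<le> i - 1" using assms by auto
    then have "1 \<le> minidx P 1 (i - 1) \<and> minidx P 1 (i - 1) \<le> i - 1" using minidx_prop[of 1 "i - 1" P] by blast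
    then show ?thesis unfolding PC_def using 2 by auto
  next
    case 3 then show ?thesis unfolding PC_def using assms by auto
  next
    case 4
    then have a: "1 \<le> PP P i \<and> PP P i < i" using PP_cases[of P i] by auto
    then have "PP P i + 1 \<le> i - 1" using 4 by auto
    then have "PP P i + 1 \<le> minidx P (PP P i + 1) (i - 1) \<and> minidx P (PP P i + 1) (i - 1) \<le> i - 1"
      using minidx_prop[of "PP P i + 1" "i - 1" P] by blast
    then show ?thesis unfolding PC_def using 4 a by auto
  qed
qed

lemma PC_key:
  assumes "1 \<le> i" "PC P i < i"
  shows "prec P i (PC P i) \<and> 1 \<le> PC P i \<and>
    (\<exists>lo. lo < PC P i \<and> (\<forall>k. lo < k \<and> k < i \<longrightarrow> preceq P (PC P i) k)) \<and>
    PP P (PC P i) = (if PP P i = i then PC P i else PP P i)"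
proof -
  have i1: "i \<noteq> 1" using assms unfolding PC_def by auto
  show ?thesis
  proof (cases "PP P i = i")
    case True
    have c: "PC P i = minidx P 1 (i - 1)" using True i1 unfolding PC_def by auto
    have m: "1 \<le> PC P i \<and> PC P i \<le> i - 1 \<and> (\<forall>k. 1 \<le> k \<and> k \<le> i - 1 \<longrightarrow> preceq P (PC P i) k)"
      using minidx_prop[of 1 "i - 1" P] c i1 assms by auto
    have pi: "\<forall>k. 1 \<le> k \<and> k < i \<longrightarrow> prec P i k" using PP_cases[of P i] True by auto
    have "PP P (PC P i) = PC P i"
    proof (rule PP_char2, intro allI impI)
      fix k assume k: "1 \<le> k \<and> k < PC P i"
      then have "preceq P (PC P i) k" using m by auto
      then have "prec P (PC P i) k" using k unfolding preceq_def by auto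
      then show "\<not> prec P k (PC P i)" using prec_asym by blast
    qed
    moreover have "\<forall>k. 0 < k \<and> k < i \<longrightarrow> preceq P (PC P i) k" using m by auto
    moreover have "prec P i (PC P i)" using pi m assms(2) by blast
    moreover have "(0::nat) < PC P i" using m by simp
    ultimately show ?thesis using True m by (intro conjI exI[of _ 0]) simp_all
  next
    case False
    then have p: "1 \<le> PP P i \<and> PP P i < i \<and> prec P (PP P i) i \<and> (\<forall>k. PP P i < k \<and> k < i \<longrightarrow> prec P i k)"
      using PP_cases[of P i] by auto
    have ne: "PP P i \<noteq> i - 1" using False i1 assms unfolding PC_def by auto
    have c: "PC P i = minidx P (PP P i + 1) (i - 1)" using False ne i1 unfolding PC_def by auto
    have m: "PP P i + 1 \<le> PC P i \<and> PC P i \<le> i - 1 \<and> (\<forall>k. PP P i + 1 \<le> k \<and> k \<le> i - 1 \<longrightarrow> preceq P (PC P i) k)"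
      using minidx_prop[of "PP P i + 1" "i - 1" P] c p ne by auto
    have ic: "prec P i (PC P i)" using p m by auto
    have "PP P (PC P i) = PP P i"
    proof (rule PP_char1)
      show "1 \<le> PP P i" using p by auto
      show "PP P i < PC P i" using m by auto
      show "prec P (PP P i) (PC P i)" using p ic prec_trans by blast
      show "\<forall>k. PP P i < k \<and> k < PC P i \<longrightarrow> \<not> prec P k (PC P i)"
      proof (intro allI impI)
        fix k assume k: "PP P i < k \<and> k < PC P i"
        then have "preceq P (PC P i) k" using m by auto
        then have "prec P (PC P i) k" using k unfolding preceq_def by auto
        then show "\<not> prec P k (PC P i)" using prec_asym by blast
      qed
    qed
    moreover have "\<forall>k. PP P i < k \<and> k < i \<longrightarrow> preceq P (PC P i) k" using m by auto
    moreover have "PP P i < PC P i" "1 \<le> PC P i" using m p by auto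
    ultimately show ?thesis using False ic by (intro conjI exI[of _ "PP P i"]) simp_all
  qed
qed

lemma PC_unique:
  assumes "1 \<le> j1" "j1 < j2" "PC P j1 = c" "PC P j2 = c" "c < j1"
  shows False
proof -
  have k1: "prec P j1 c" using PC_key[of j1 P] assms by auto
  obtain lo where lo: "lo < c" "\<forall>k. lo < k \<and> k < j2 \<longrightarrow> preceq P c k"
    using PC_key[of j2 P] assms by auto
  have "preceq P c j1" using lo assms by auto
  then show False using k1 prec_asym assms unfolding preceq_def by blast
qed

lemma GP_child:
  assumes "i < j" "j \<le> m" "PC P j = i"
  shows "GP P m i = j"
proof -
  have u: "\<And>j'. i < j' \<and> j' \<le> m \<and> PC P j' = i \<Longrightarrow> j' = j"
  proof -
    fix j' assume j': "i < j' \<and> j' \<le> m \<and> PC P j' = i"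
    show "j' = j"
    proof (rule ccontr)
      assume "j' \<noteq> j"
      then have "j' < j \<or> j < j'" by auto
      then show False
      proof
        assume "j' < j"
        then show False using PC_unique[of j' j P i] assms j' by linarith
      next
        assume "j < j'"
        then show False using PC_unique[of j j' P i] assms j' by linarith
      qed
    qed
  qed
  have "(THE j. i < j \<and> j \<le> m \<and> PC P j = i) = j"
    using assms u by (intro the_equality) blast+
  moreover have "\<exists>j. i < j \<and> j \<le> m \<and> PC P j = i" using assms by blast
  ultimately show ?thesis unfolding GP_def by simp
qed

lemma GP_nochild:
  assumes "\<not> (\<exists>j. i < j \<and> j \<le> m \<and> PC P j = i)"
  shows "GP P m i = PP P i"
  using assms unfolding GP_def by auto

lemma PP_from_GP:
  assumes R: "\<forall>i. 1 \<le> i \<and> i \<le> m \<longrightarrow> preceq S (GP P m i) i"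
  shows "1 \<le> i \<Longrightarrow> i \<le> m \<Longrightarrow> preceq S (PP P i) i"
proof (induction "m - i" arbitrary: i rule: less_induct)
  case less
  show ?case
  proof (cases "\<exists>j. i < j \<and> j \<le> m \<and> PC P j = i")
    case True
    then obtain j where j: "i < j" "j \<le> m" "PC P j = i" by auto
    have g: "GP P m i = j" using GP_child[OF j] .
    have ji: "preceq S j i" using R less.prems g by metis
    have k: "PP P i = (if PP P j = j then i else PP P j)"
      using PC_key[of j P] j less.prems by auto
    show ?thesis
    proof (cases "PP P j = j")
      case True
      then show ?thesis using k by (simp add: preceq_def)
    next
      case False
      have "preceq S (PP P j) j" using less.hyps[of j] j less.prems by auto
      then show ?thesis using k False ji preceq_trans by metis
    qed
  next
    case False
    then show ?thesis using GP_nochild[OF False] R less.prems by metis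
  qed
qed

theorem mainTheorem3:
  fixes P S :: "nat \<Rightarrow> 'a::linorder" and m :: nat
  shows "(\<forall>i. 1 \<le> i \<and> i \<le> m \<longrightarrow> preceq S (PP P i) i \<and> preceq S i (PC P i))
     \<longleftrightarrow> (\<forall>i. 1 \<le> i \<and> i \<le> m \<longrightarrow> preceq S (GP P m i) i)"
proof
  assume L: "\<forall>i. 1 \<le> i \<and> i \<le> m \<longrightarrow> preceq S (PP P i) i \<and> preceq S i (PC P i)"
  show "\<forall>i. 1 \<le> i \<and> i \<le> m \<longrightarrow> preceq S (GP P m i) i"
  proof (intro allI impI)
    fix i assume i: "1 \<le> i \<and> i \<le> m"
    show "preceq S (GP P m i) i"
    proof (cases "\<exists>j. i < j \<and> j \<le> m \<and> PC P j = i")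
      case True
      then obtain j where j: "i < j" "j \<le> m" "PC P j = i" by auto
      have "1 \<le> j \<and> j \<le> m" using j i by simp
      then have "preceq S j (PC P j)" using L by blast
      then show ?thesis using GP_child[OF j] j(3) by simp
    next
      case False
      have "preceq S (PP P i) i" using L i by blast
      then show ?thesis using GP_nochild[OF False] by simp
    qed
  qed
next
  assume R: "\<forall>i. 1 \<le> i \<and> i \<le> m \<longrightarrow> preceq S (GP P m i) i"
  show "\<forall>i. 1 \<le> i \<and> i \<le> m \<longrightarrow> preceq S (PP P i) i \<and> preceq S i (PC P i)"
  proof (intro allI impI conjI)
    fix i assume i: "1 \<le> i \<and> i \<le> m"
    show "preceq S (PP P i) i" using PP_from_GP[OF R] i by auto
    show "preceq S i (PC P i)"
    proof (cases "PC P i = i")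
      case True then show ?thesis by (simp add: preceq_def)
    next
      case False
      then have lt: "PC P i < i" "1 \<le> PC P i" using PC_bounds[of i P] i by auto
      have "GP P m (PC P i) = i" using GP_child[OF lt(1)] i by auto
      moreover have "1 \<le> PC P i \<and> PC P i \<le> m" using lt i by simp
      ultimately show ?thesis using R by metis
    qed
  qed
qed

end
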